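(* Let $k$ be a field of characteristic $p>2$ ($p$ prime). For any $u,v,w\in k_1\langle X\rangle$, $$\kappa(u,v+w)\equiv\kappa(u,v)+\kappa(u,w)+\sum_{i=0}^{p-2}(i+1)^{-1}\binom{p-1}{i}[u,v^{i+1}w^{p-(i+1)}u^{p-1}]\pmod{T^{(3)}}.$$
   Context: $X=\{x_i\mid i\ge0\}$ is countably infinite; $k_1\langle X\rangle$ is the free unitary associative $k$-algebra on $X$. $[a,b]=ab-ba$, $[a,b,c]=[[a,b],c]$. $T^{(3)}$ is the $T$-ideal of $k_1\langle X\rangle$ (ideal invariant under all endomorphisms) generated by $[x_1,x_2,x_3]$. For $u,v\in k_1\langle X\rangle$, $\kappa(u,v)=[u,v]u^{p-1}v^{p-1}$. Congruence modulo a subspace $U$ means the difference lies in $U$. *)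

theory Defs
  imports "HOL-Library.Poly_Mapping" "HOL-Computational_Algebra.Primes"
begin

text \<open>Words (monomials) over the alphabet X = {x_i | i >= 0}; the (noncommutative)
  monoid operation is concatenation, written as +.\<close>
datatype word = Word "nat list"

instantiation word :: monoid_add
begin
definition zero_word :: word where "zero_word = Word []"
fun plus_word :: "word \<Rightarrow> word \<Rightarrow> word" where
  "plus_word (Word a) (Word b) = Word (a @ b)"
instance
proof
  fix a b c :: word
  show "a + b + c = a + (b + c)" by (cases a; cases b; cases c) simp
  show "0 + a = a" by (cases a) (simp add: zero_word_def)
  show "a + 0 = a" by (cases a) (simp add: zero_word_def)
qed
end

text \<open>The free unitary associative k-algebra k_1<X>: finitely supported k-linear
  combinations of words, with convolution product (a ring_1 via Poly_Mapping).\<close>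
type_synonym 'k freealg = "word \<Rightarrow>\<^sub>0 'k"

definition gen :: "nat \<Rightarrow> 'k::field freealg" where
  "gen i = Poly_Mapping.single (Word [i]) 1"

definition sc :: "'k::field \<Rightarrow> 'k freealg" where
  "sc c = Poly_Mapping.single 0 c"

definition comm :: "'a::ring \<Rightarrow> 'a \<Rightarrow> 'a" where
  "comm a b = a * b - b * a"

definition kappa :: "nat \<Rightarrow> 'a::ring_1 \<Rightarrow> 'a \<Rightarrow> 'a" where
  "kappa p u v = comm u v * u ^ (p - 1) * v ^ (p - 1)"

definition alg_endo :: "('k::field freealg \<Rightarrow> 'k freealg) \<Rightarrow> bool" where
  "alg_endo \<phi> \<longleftrightarrow> (\<forall>a b. \<phi> (a + b) = \<phi> a + \<phi> b)
     \<and> (\<forall>c a. \<phi> (sc c * a) = sc c * \<phi> a)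
     \<and> (\<forall>a b. \<phi> (a * b) = \<phi> a * \<phi> b)
     \<and> \<phi> 1 = 1"

text \<open>Two-sided ideals (automatically k-subspaces, since sc c * a lies in them).\<close>
definition two_sided_ideal :: "'k::field freealg set \<Rightarrow> bool" where
  "two_sided_ideal I \<longleftrightarrow> 0 \<in> I \<and> (\<forall>a\<in>I. \<forall>b\<in>I. a + b \<in> I)
     \<and> (\<forall>a\<in>I. \<forall>r. r * a \<in> I \<and> a * r \<in> I)"

definition T_ideal :: "'k::field freealg set \<Rightarrow> bool" where
  "T_ideal I \<longleftrightarrow> two_sided_ideal I \<and> (\<forall>\<phi>. alg_endo \<phi> \<longrightarrow> \<phi> ` I \<subseteq> I)"

definition T3 :: "'k::field freealg set" where
  "T3 = \<Inter> {I. T_ideal I \<and> comm (comm (gen 1) (gen 2)) (gen 3) \<in> I}"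

end

theory Submission imports Defs begin

fun ev :: "(nat \<Rightarrow> 'a::monoid_mult) \<Rightarrow> word \<Rightarrow> 'a" where
  "ev s (Word l) = prod_list (map s l)"

lemma ev_plus: "ev s (x + y) = ev s x * ev s y"
  by (cases x; cases y) simp

lemma ev_zero: "ev s 0 = 1"
  by (simp add: zero_word_def)

lemma pm_expand: "(f :: 'a::monoid_add \<Rightarrow>\<^sub>0 'b::comm_monoid_add) = (\<Sum>x\<in>Poly_Mapping.keys f. Poly_Mapping.single x (Poly_Mapping.lookup f x))"
proof (rule poly_mapping_eqI)
  fix k
  have "(\<Sum>x\<in>Poly_Mapping.keys f. Poly_Mapping.lookup (Poly_Mapping.single x (Poly_Mapping.lookup f x)) k)
     = (\<Sum>x\<in>Poly_Mapping.keys f. if x = k then Poly_Mapping.lookup f x else 0)"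
    by (rule sum.cong) (auto simp: lookup_single)
  also have "\<dots> = Poly_Mapping.lookup f k"
    by (simp add: in_keys_iff)
  finally show "Poly_Mapping.lookup f k = Poly_Mapping.lookup (\<Sum>x\<in>Poly_Mapping.keys f. Poly_Mapping.single x (Poly_Mapping.lookup f x)) k"
    by (simp add: lookup_sum)
qed

lemma sc_mult: "sc (a * b) = sc a * sc b"
  by (simp add: sc_def mult_single)
lemma sc_add: "sc (a + b) = sc a + sc b"
  by (simp add: sc_def single_add)
lemma sc_zero[simp]: "sc 0 = 0" by (simp add: sc_def)
lemma sc_one[simp]: "sc 1 = 1" by (simp add: sc_def)
lemma sc_of_nat: "sc (of_nat n) = of_nat n" by (simp add: sc_def)

lemma sc_single_comm: "sc c * Poly_Mapping.single x a = Poly_Mapping.single x a * sc c"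
  by (simp add: sc_def mult_single mult.commute)

lemma sc_central: "sc c * f = f * sc c"
proof -
  have "sc c * f = (\<Sum>x\<in>Poly_Mapping.keys f. sc c * Poly_Mapping.single x (Poly_Mapping.lookup f x))"
    by (subst pm_expand) (simp add: sum_distrib_left)
  also have "\<dots> = (\<Sum>x\<in>Poly_Mapping.keys f. Poly_Mapping.single x (Poly_Mapping.lookup f x) * sc c)"
    by (simp add: sc_single_comm)
  also have "\<dots> = f * sc c"
    by (subst (2) pm_expand) (simp add: sum_distrib_right)
  finally show ?thesis .
qed

definition phi :: "(nat \<Rightarrow> 'k::field freealg) \<Rightarrow> 'k freealg \<Rightarrow> 'k freealg" where
  "phi s f = (\<Sum>x\<in>Poly_Mapping.keys f. sc (Poly_Mapping.lookup f x) * ev s x)"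

lemma phi_sup: assumes "finite S" "Poly_Mapping.keys f \<subseteq> S"
  shows "phi s f = (\<Sum>x\<in>S. sc (Poly_Mapping.lookup f x) * ev s x)"
  unfolding phi_def using assms
  by (intro sum.mono_neutral_left) (auto simp: in_keys_iff)

lemma phi_add: "phi s (f + g) = phi s f + phi s g"
proof -
  let ?S = "Poly_Mapping.keys f \<union> Poly_Mapping.keys g"
  have "phi s (f + g) = (\<Sum>x\<in>?S. sc (Poly_Mapping.lookup (f+g) x) * ev s x)"
    by (rule phi_sup) (auto simp: keys_add)
  also have "\<dots> = (\<Sum>x\<in>?S. sc (Poly_Mapping.lookup f x) * ev s x) + (\<Sum>x\<in>?S. sc (Poly_Mapping.lookup g x) * ev s x)"
    by (simp add: lookup_add sc_add distrib_right sum.distrib)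
  also have "\<dots> = phi s f + phi s g"
    using phi_sup[of ?S f s] phi_sup[of ?S g s] by simp
  finally show ?thesis .
qed

lemma phi_zero[simp]: "phi s 0 = 0" by (simp add: phi_def)

lemma phi_sum: "phi s (sum F A) = (\<Sum>a\<in>A. phi s (F a))"
  by (induction A rule: infinite_finite_induct) (auto simp: phi_add)

lemma phi_single: "phi s (Poly_Mapping.single x c) = sc c * ev s x"
  by (cases "c = 0") (simp_all add: phi_def)

lemma phi_mult: "phi s (f * g) = phi s f * phi s g"
proof -
  let ?F = "Poly_Mapping.keys f" and ?G = "Poly_Mapping.keys g"
  have "f * g = (\<Sum>x\<in>?F. \<Sum>y\<in>?G. Poly_Mapping.single x (Poly_Mapping.lookup f x) * Poly_Mapping.single y (Poly_Mapping.lookup g y))"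
  proof -
    have "f * g = (\<Sum>x\<in>?F. Poly_Mapping.single x (Poly_Mapping.lookup f x)) * (\<Sum>y\<in>?G. Poly_Mapping.single y (Poly_Mapping.lookup g y))"
      by (rule arg_cong2[where f="(*)"]) (rule pm_expand)+
    then show ?thesis by (simp add: sum_distrib_left sum_distrib_right sum.swap[of _ ?G])
  qed
  then have "phi s (f * g) = (\<Sum>x\<in>?F. \<Sum>y\<in>?G. sc (Poly_Mapping.lookup f x) * sc (Poly_Mapping.lookup g y) * (ev s x * ev s y))"
    by (simp add: phi_sum mult_single phi_single ev_plus sc_mult)
  also have "\<dots> = (\<Sum>x\<in>?F. \<Sum>y\<in>?G. (sc (Poly_Mapping.lookup f x) * ev s x) * (sc (Poly_Mapping.lookup g y) * ev s y))"
    by (intro sum.cong refl) (metis mult.assoc sc_central)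
  also have "\<dots> = phi s f * phi s g"
    by (simp add: phi_def sum_distrib_left sum_distrib_right sum.swap[of _ ?G])
  finally show ?thesis .
qed

lemma phi_sc: "phi s (sc c) = sc c"
  by (simp add: sc_def phi_single ev_zero)

lemma phi_endo: "alg_endo (phi s)"
  unfolding alg_endo_def
proof (intro conjI allI)
  show "phi s 1 = 1"
    by (metis ev_zero mult_1_right phi_single sc_def sc_one single_one)
  fix c a show "phi s (sc c * a) = sc c * phi s a"
    by (simp add: phi_mult phi_sc)
qed (simp_all add: phi_add phi_mult)

lemma phi_gen: "phi s (gen i) = s i"
  by (simp add: gen_def phi_single)

lemma phi_minus: "phi s (a - b) = phi s a - phi s b"
  by (metis add_diff_cancel diff_add_cancel phi_add)

lemma phi_comm: "phi s (comm a b) = comm (phi s a) (phi s b)"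
  by (simp add: comm_def phi_minus phi_mult)


locale cm =
  fixes I :: "'a::ring_1 set"
  assumes I0: "0 \<in> I" and Iadd: "a \<in> I \<Longrightarrow> b \<in> I \<Longrightarrow> a + b \<in> I"
    and Il: "a \<in> I \<Longrightarrow> r * a \<in> I" and Ir: "a \<in> I \<Longrightarrow> a * r \<in> I"
    and I3: "comm (comm a b) c \<in> I"
begin

definition cg :: "'a \<Rightarrow> 'a \<Rightarrow> bool" where "cg a b \<longleftrightarrow> a - b \<in> I"

lemma Ineg: "a \<in> I \<Longrightarrow> - a \<in> I"
  using Il[of a "-1"] by simp

lemma Idiff: "a \<in> I \<Longrightarrow> b \<in> I \<Longrightarrow> a - b \<in> I"
  using Iadd[of a "-b"] Ineg by simp

lemma cg_refl[simp]: "cg a a" by (simp add: cg_def I0)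
lemma cg_eq: "a = b \<Longrightarrow> cg a b" by simp
lemma cg_sym: "cg a b \<Longrightarrow> cg b a"
  unfolding cg_def using Ineg by fastforce
lemma cg_trans: "cg a b \<Longrightarrow> cg b c \<Longrightarrow> cg a c"
  unfolding cg_def using Iadd by fastforce
lemma cg_add: "cg a b \<Longrightarrow> cg c d \<Longrightarrow> cg (a + c) (b + d)"
proof -
  have "(a + c) - (b + d) = (a - b) + (c - d)" by (simp add: algebra_simps)
  then show "cg a b \<Longrightarrow> cg c d \<Longrightarrow> cg (a + c) (b + d)" unfolding cg_def using Iadd by metis
qed
lemma cg_diff: "cg a b \<Longrightarrow> cg c d \<Longrightarrow> cg (a - c) (b - d)"
proof -
  have "(a - c) - (b - d) = (a - b) - (c - d)" by (simp add: algebra_simps)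
  then show "cg a b \<Longrightarrow> cg c d \<Longrightarrow> cg (a - c) (b - d)" unfolding cg_def using Idiff by metis
qed
lemma cg_lm: "cg a b \<Longrightarrow> cg (r * a) (r * b)"
  unfolding cg_def using Il by (metis right_diff_distrib)
lemma cg_rm: "cg a b \<Longrightarrow> cg (a * r) (b * r)"
  unfolding cg_def using Ir by (metis left_diff_distrib)
lemma cg_I: "cg a b \<longleftrightarrow> a - b \<in> I" by (simp add: cg_def)
lemma cg_zero: "x \<in> I \<Longrightarrow> cg (a + x) a" by (simp add: cg_def)
lemma cg_sum: "(\<And>i. i \<in> A \<Longrightarrow> cg (f i) (g i)) \<Longrightarrow> cg (sum f A) (sum g A)"
  by (induction A rule: infinite_finite_induct) (auto intro: cg_add)

definition cen :: "'a \<Rightarrow> bool" where "cen c \<longleftrightarrow> (\<forall>z. cg (c * z) (z * c))"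

lemma cen_comm: "cen (comm a b)"
  unfolding cen_def cg_def using I3 by (simp add: comm_def)

lemma cenD: "cen c \<Longrightarrow> cg (c * z) (z * c)" by (simp add: cen_def)

lemma killer: "comm x y * comm x z \<in> I"
proof -
  let ?c = "comm x y"
  have e1: "comm x (y * x) = ?c * x" by (simp add: comm_def algebra_simps)
  have A: "?c * x * z - z * ?c * x \<in> I"
  proof -
    have "comm (comm x (y * x)) z = ?c * x * z - z * ?c * x"
      by (simp only: e1 comm_def[of "comm x y * x" z] mult.assoc)
    then show ?thesis using I3[of x "y*x" z] by simp
  qed
  have B: "z * ?c * x - ?c * z * x \<in> I"
    using Ir[of "z * ?c - ?c * z" x] cenD[OF cen_comm, of x y z] cg_sym
    by (simp add: cg_def left_diff_distrib)
  have "?c * x * z - ?c * z * x \<in> I" using Iadd[OF A B] by simp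
  moreover have "?c * x * z - ?c * z * x = ?c * comm x z" by (simp add: comm_def algebra_simps)
  ultimately show ?thesis by simp
qed

end

lemma pascal_sum:
  fixes g :: "nat \<Rightarrow> 'a::ring_1"
  shows "(\<Sum>i\<le>n. of_nat (n choose i) * g (Suc i)) + (\<Sum>i\<le>n. of_nat (n choose i) * g i)
       = (\<Sum>i\<le>Suc n. of_nat (Suc n choose i) * g i)"
proof -
  have a: "(\<Sum>i\<le>n. of_nat (n choose i) * g i) = (\<Sum>i\<le>Suc n. of_nat (n choose i) * g i)"
    by (simp add: sum.atMost_Suc binomial_eq_0)
  have b: "(\<Sum>i\<le>Suc n. of_nat (n choose i) * g i) = g 0 + (\<Sum>i\<le>n. of_nat (n choose Suc i) * g (Suc i))"
    by (subst sum.atMost_Suc_shift) simp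
  have c: "(\<Sum>i\<le>Suc n. of_nat (Suc n choose i) * g i) = g 0 + (\<Sum>i\<le>n. of_nat (Suc n choose Suc i) * g (Suc i))"
    by (subst sum.atMost_Suc_shift) simp
  show ?thesis unfolding a b c
    by (simp add: distrib_right sum.distrib algebra_simps)
qed

context cm begin

lemma S1:
  assumes "cen c" "c * comm x y \<in> I"
  shows "cg (c * x ^ m * y) (c * y * x ^ m)"
proof (induction m)
  case 0 then show ?case by simp
next
  case (Suc m)
  have e: "c * x ^ Suc m * y = c * x ^ m * y * x + c * x ^ m * comm x y"
    by (simp add: comm_def power_Suc2 algebra_simps del: power_Suc)
  have r1: "cg (c * x ^ m * comm x y) (x ^ m * (c * comm x y))"
    using cg_rm[OF cenD[OF assms(1), of "x ^ m"], of "comm x y"] by (simp add: mult.assoc)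
  have r2: "cg (x ^ m * (c * comm x y)) 0"
    using Il[OF assms(2)] by (simp add: cg_def)
  have r: "cg (c * x ^ m * comm x y) 0" using cg_trans[OF r1 r2] .
  have q: "cg (c * x ^ m * y * x) (c * y * x ^ Suc m)"
    using cg_rm[OF Suc.IH, of x] by (simp add: power_Suc2 mult.assoc del: power_Suc)
  show ?case unfolding e using cg_add[OF q r] by simp
qed

lemma S2:
  assumes "cen c" "c * comm x y \<in> I"
  shows "cg (c * x ^ m * y ^ n) (c * y ^ n * x ^ m)"
proof (induction n)
  case 0 then show ?case by simp
next
  case (Suc n)
  have a: "cg (c * x ^ m * y ^ Suc n) (c * y ^ n * x ^ m * y)"
    using cg_rm[OF Suc.IH, of y] by (simp add: power_Suc2 mult.assoc del: power_Suc)
  have b: "cg (c * y ^ n * x ^ m * y) (y ^ n * (c * x ^ m * y))"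
    using cg_rm[OF cenD[OF assms(1), of "y ^ n"], of "x ^ m * y"] by (simp add: mult.assoc)
  have d: "cg (y ^ n * (c * x ^ m * y)) (y ^ n * c * (y * x ^ m))"
    using cg_lm[OF S1[OF assms, of m], of "y ^ n"] by (simp add: mult.assoc)
  have e: "cg (y ^ n * c * (y * x ^ m)) (c * y ^ Suc n * x ^ m)"
    using cg_rm[OF cg_sym[OF cenD[OF assms(1), of "y ^ n"]], of "y * x ^ m"] by (simp add: power_Suc2 mult.assoc del: power_Suc)
  show ?case using cg_trans[OF a cg_trans[OF b cg_trans[OF d e]]] .
qed

lemma step_v:
  assumes "cen c" "c * comm w v \<in> I"
  shows "cg (c * v ^ i * w ^ j * v) (c * v ^ Suc i * w ^ j)"
proof -
  have b: "cg (c * v ^ i * w ^ j * v) (v ^ i * (c * w ^ j * v))"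
    using cg_rm[OF cenD[OF assms(1), of "v ^ i"], of "w ^ j * v"] by (simp add: mult.assoc)
  have d: "cg (v ^ i * (c * w ^ j * v)) (v ^ i * c * (v * w ^ j))"
    using cg_lm[OF S1[OF assms, of j], of "v ^ i"] by (simp add: mult.assoc)
  have e: "cg (v ^ i * c * (v * w ^ j)) (c * v ^ Suc i * w ^ j)"
    using cg_rm[OF cg_sym[OF cenD[OF assms(1), of "v ^ i"]], of "v * w ^ j"] by (simp add: power_Suc2 mult.assoc del: power_Suc)
  show ?thesis using cg_trans[OF b cg_trans[OF d e]] .
qed

lemma binom:
  assumes "cen c" "c * comm w v \<in> I"
  shows "cg (c * (v + w) ^ n) (\<Sum>i\<le>n. of_nat (n choose i) * (c * v ^ i * w ^ (n - i)))"
proof (induction n)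
  case 0 then show ?case by simp
next
  case (Suc n)
  define g where "g i = c * v ^ i * w ^ (Suc n - i)" for i
  have a: "cg (c * (v + w) ^ Suc n) ((\<Sum>i\<le>n. of_nat (n choose i) * (c * v ^ i * w ^ (n - i))) * (v + w))"
    using cg_rm[OF Suc.IH, of "v + w"] by (simp add: power_Suc2 mult.assoc del: power_Suc)
  have b: "(\<Sum>i\<le>n. of_nat (n choose i) * (c * v ^ i * w ^ (n - i))) * (v + w)
      = (\<Sum>i\<le>n. of_nat (n choose i) * (c * v ^ i * w ^ (n - i) * v)) + (\<Sum>i\<le>n. of_nat (n choose i) * (c * v ^ i * w ^ (n - i) * w))"
    by (simp add: sum_distrib_right distrib_left sum.distrib mult.assoc)
  have d: "cg ((\<Sum>i\<le>n. of_nat (n choose i) * (c * v ^ i * w ^ (n - i) * v)) + (\<Sum>i\<le>n. of_nat (n choose i) * (c * v ^ i * w ^ (n - i) * w)))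
     ((\<Sum>i\<le>n. of_nat (n choose i) * g (Suc i)) + (\<Sum>i\<le>n. of_nat (n choose i) * g i))"
  proof (rule cg_add; rule cg_sum)
    fix i assume "i \<in> {..n}"
    show "cg (of_nat (n choose i) * (c * v ^ i * w ^ (n - i) * v)) (of_nat (n choose i) * g (Suc i))"
      using cg_lm[OF step_v[OF assms, of i "n - i"]] by (simp add: g_def)
  next
    fix i assume "i \<in> {..n}"
    then have "Suc n - i = Suc (n - i)" by auto
    then show "cg (of_nat (n choose i) * (c * v ^ i * w ^ (n - i) * w)) (of_nat (n choose i) * g i)"
      by (simp add: g_def power_Suc2 mult.assoc del: power_Suc)
  qed
  show ?case using cg_trans[OF a d[folded b]] pascal_sum[of n g] by (simp add: g_def)
qed

end

context cm begin

lemma comm_pow: "cg (comm u (x ^ Suc m)) (of_nat (Suc m) * (comm u x * x ^ m))"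
proof (induction m)
  case 0 then show ?case by simp
next
  case (Suc m)
  have e: "comm u (x ^ Suc (Suc m)) = comm u (x ^ Suc m) * x + x ^ Suc m * comm u x"
    by (simp add: comm_def algebra_simps power_Suc2 del: power_Suc)
  have a: "cg (comm u (x ^ Suc m) * x) (of_nat (Suc m) * (comm u x * x ^ Suc m))"
    using cg_rm[OF Suc.IH, of x] by (simp add: power_Suc2 mult.assoc del: power_Suc)
  have b: "cg (x ^ Suc m * comm u x) (comm u x * x ^ Suc m)"
    using cg_sym[OF cenD[OF cen_comm]] .
  show ?case unfolding e using cg_add[OF a b]
    by (simp add: algebra_simps del: power_Suc)
qed

lemma R:
  assumes "cen c" "c * comm u v \<in> I" "c * comm u w \<in> I"
  shows "cg (c * u ^ n * v ^ i * w ^ j) (c * v ^ i * w ^ j * u ^ n)"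
proof -
  have a: "cg (c * u ^ n * v ^ i * w ^ j) (v ^ i * (c * u ^ n * w ^ j))"
    using cg_rm[OF cg_trans[OF S2[OF assms(1,2), of n i] cg_rm[OF cenD[OF assms(1), of "v ^ i"], of "u ^ n"]], of "w ^ j"]
    by (simp add: mult.assoc)
  have b: "cg (v ^ i * (c * u ^ n * w ^ j)) (v ^ i * c * w ^ j * u ^ n)"
    using cg_lm[OF S2[OF assms(1,3), of n j], of "v ^ i"] by (simp add: mult.assoc)
  have d: "cg (v ^ i * c * w ^ j * u ^ n) (c * v ^ i * w ^ j * u ^ n)"
    using cg_rm[OF cg_sym[OF cenD[OF assms(1), of "v ^ i"]], of "w ^ j * u ^ n"] by (simp add: mult.assoc)
  show ?thesis using cg_trans[OF a cg_trans[OF b d]] .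
qed

lemma K:
  assumes "cen c" "c * comm u v \<in> I" "c * comm u w \<in> I" "c * comm w v \<in> I"
  shows "cg (c * u ^ n * (v + w) ^ n) (\<Sum>i\<le>n. of_nat (n choose i) * (c * v ^ i * w ^ (n - i) * u ^ n))"
proof -
  have a: "cg (c * u ^ n * (v + w) ^ n) (u ^ n * (c * (v + w) ^ n))"
    using cg_rm[OF cenD[OF assms(1), of "u ^ n"], of "(v + w) ^ n"] by (simp add: mult.assoc)
  have b: "cg (u ^ n * (c * (v + w) ^ n)) (\<Sum>i\<le>n. of_nat (n choose i) * (u ^ n * c * v ^ i * w ^ (n - i)))"
  proof -
    have *: "\<And>k X. u ^ n * (of_nat k * X) = of_nat k * (u ^ n * X)"
      by (metis mult.assoc mult_of_nat_commute)
    show ?thesis using cg_lm[OF binom[OF assms(1,4), of n], of "u ^ n"]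
      by (simp add: sum_distrib_left mult.assoc *)
  qed
  have d: "cg (\<Sum>i\<le>n. of_nat (n choose i) * (u ^ n * c * v ^ i * w ^ (n - i))) (\<Sum>i\<le>n. of_nat (n choose i) * (c * v ^ i * w ^ (n - i) * u ^ n))"
  proof (rule cg_sum)
    fix i
    have "cg (u ^ n * c * v ^ i * w ^ (n - i)) (c * v ^ i * w ^ (n - i) * u ^ n)"
      using cg_trans[OF cg_rm[OF cg_rm[OF cg_sym[OF cenD[OF assms(1), of "u ^ n"]], of "v ^ i"], of "w ^ (n - i)"] R[OF assms(1-3), of n i "n - i"]] .
    then show "cg (of_nat (n choose i) * (u ^ n * c * v ^ i * w ^ (n - i))) (of_nat (n choose i) * (c * v ^ i * w ^ (n - i) * u ^ n))"
      by (rule cg_lm)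
  qed
  show ?thesis using cg_trans[OF a cg_trans[OF b d]] .
qed

lemma T:
  "cg (comm u (v ^ Suc i * w ^ Suc j * u ^ n))
      (of_nat (Suc i) * (comm u v * v ^ i * w ^ Suc j * u ^ n) + of_nat (Suc j) * (comm u w * v ^ Suc i * w ^ j * u ^ n))"
proof -
  have un: "u * u ^ n = u ^ n * u" by (simp add: power_commutes)
  have e: "comm u (v ^ Suc i * w ^ Suc j * u ^ n) = comm u (v ^ Suc i) * w ^ Suc j * u ^ n + v ^ Suc i * comm u (w ^ Suc j) * u ^ n"
    by (simp add: comm_def algebra_simps un del: power_Suc)
  have a: "cg (comm u (v ^ Suc i) * w ^ Suc j * u ^ n) (of_nat (Suc i) * (comm u v * v ^ i * w ^ Suc j * u ^ n))"
    using cg_rm[OF cg_rm[OF comm_pow[of u v i]], of "w ^ Suc j", of "u ^ n"] by (simp add: mult.assoc del: power_Suc of_nat_Suc)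
  have b0: "cg (v ^ Suc i * comm u (w ^ Suc j) * u ^ n) (v ^ Suc i * (of_nat (Suc j) * (comm u w * w ^ j)) * u ^ n)"
    using cg_rm[OF cg_lm[OF comm_pow[of u w j], of "v ^ Suc i"], of "u ^ n"] .
  have b1: "v ^ Suc i * (of_nat (Suc j) * (comm u w * w ^ j)) * u ^ n = of_nat (Suc j) * (v ^ Suc i * comm u w * w ^ j * u ^ n)"
    by (metis mult.assoc mult_of_nat_commute)
  have b2: "cg (of_nat (Suc j) * (v ^ Suc i * comm u w * w ^ j * u ^ n)) (of_nat (Suc j) * (comm u w * v ^ Suc i * w ^ j * u ^ n))"
    using cg_lm[OF cg_rm[OF cg_rm[OF cg_sym[OF cenD[OF cen_comm, of u w "v ^ Suc i"]], of "w ^ j"], of "u ^ n"]] .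
  show ?thesis unfolding e using cg_add[OF a cg_trans[OF b0[unfolded b1] b2]] .
qed

end

context cm begin

lemma main:
  fixes a :: "nat \<Rightarrow> 'a" and m n :: nat
  assumes nm: "n = Suc m"
    and A1: "\<And>i. i \<le> m \<Longrightarrow> a i * of_nat (Suc i) = of_nat (n choose i)"
    and A2: "\<And>i. i \<le> m \<Longrightarrow> a i * of_nat (n - i) = of_nat (n choose Suc i)"
  shows "cg (comm u (v + w) * u ^ n * (v + w) ^ n)
     (comm u v * u ^ n * v ^ n + comm u w * u ^ n * w ^ n
       + (\<Sum>i = 0..m. a i * comm u (v ^ (i + 1) * w ^ (n - i) * u ^ n)))"
proof -
  define c1 where "c1 = comm u v"
  define c2 where "c2 = comm u w"
  define M where "M c i j = c * v ^ i * w ^ j * u ^ n" for c i j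
  have h1: "cen c1" "c1 * comm u v \<in> I" "c1 * comm u w \<in> I" "c1 * comm w v \<in> I"
  proof -
    show "cen c1" "c1 * comm u v \<in> I" "c1 * comm u w \<in> I" unfolding c1_def by (simp_all add: cen_comm killer)
    have "comm u v * comm w v = comm v u * comm v w" by (simp add: comm_def algebra_simps)
    then show "c1 * comm w v \<in> I" unfolding c1_def by (simp add: killer)
  qed
  have h2: "cen c2" "c2 * comm u v \<in> I" "c2 * comm u w \<in> I" "c2 * comm w v \<in> I"
  proof -
    show "cen c2" "c2 * comm u v \<in> I" "c2 * comm u w \<in> I" unfolding c2_def by (simp_all add: cen_comm killer)
    have "comm u w * comm w v = - (comm w u * comm w v)" by (simp add: comm_def algebra_simps)
    then show "c2 * comm w v \<in> I" unfolding c2_def by (simp add: killer Ineg)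
  qed
  have L: "comm u (v + w) * u ^ n * (v + w) ^ n = c1 * u ^ n * (v + w) ^ n + c2 * u ^ n * (v + w) ^ n"
    by (simp add: c1_def c2_def comm_def algebra_simps)
  have K1: "cg (c1 * u ^ n * (v + w) ^ n) (\<Sum>i\<le>n. of_nat (n choose i) * M c1 i (n - i))"
    unfolding M_def using K[OF h1] .
  have K2: "cg (c2 * u ^ n * (v + w) ^ n) (\<Sum>i\<le>n. of_nat (n choose i) * M c2 i (n - i))"
    unfolding M_def using K[OF h2(1-3) h2(4)] .
  have kv: "cg (c1 * u ^ n * v ^ n) (M c1 n 0)"
    using R[OF h1(1-3), of n n 0] by (simp add: M_def)
  have kw: "cg (c2 * u ^ n * w ^ n) (M c2 0 n)"
    using R[OF h2(1-3), of n 0 n] by (simp add: M_def)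
  have TS: "cg (\<Sum>i = 0..m. a i * comm u (v ^ (i + 1) * w ^ (n - i) * u ^ n))
      (\<Sum>i = 0..m. of_nat (n choose i) * M c1 i (n - i) + of_nat (n choose Suc i) * M c2 (Suc i) (n - Suc i))"
  proof (rule cg_sum)
    fix i assume "i \<in> {0..m}"
    then have im: "i \<le> m" by simp
    have e1: "n - i = Suc (m - i)" "n - Suc i = m - i" using im nm by auto
    have t: "cg (a i * comm u (v ^ Suc i * w ^ Suc (m - i) * u ^ n))
       (a i * (of_nat (Suc i) * M c1 i (Suc (m - i)) + of_nat (Suc (m - i)) * M c2 (Suc i) (m - i)))"
      using cg_lm[OF T[of u v i w "m - i" n]] by (simp add: M_def c1_def c2_def del: power_Suc of_nat_Suc)
    have "a i * (of_nat (Suc i) * M c1 i (Suc (m - i)) + of_nat (Suc (m - i)) * M c2 (Suc i) (m - i))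
        = (a i * of_nat (Suc i)) * M c1 i (Suc (m - i)) + (a i * of_nat (Suc (m - i))) * M c2 (Suc i) (m - i)"
      by (simp only: distrib_left mult.assoc)
    also have "\<dots> = of_nat (n choose i) * M c1 i (n - i) + of_nat (n choose Suc i) * M c2 (Suc i) (n - Suc i)"
    proof -
      have A2': "a i * of_nat (Suc (m - i)) = of_nat (n choose Suc i)" using A2[OF im] e1 by simp
      show ?thesis by (simp only: A1[OF im] A2' e1)
    qed
    finally show "cg (a i * comm u (v ^ (i + 1) * w ^ (n - i) * u ^ n))
      (of_nat (n choose i) * M c1 i (n - i) + of_nat (n choose Suc i) * M c2 (Suc i) (n - Suc i))"
      using t e1 by simp
  qed
  have s1: "(\<Sum>i\<le>n. of_nat (n choose i) * M c1 i (n - i)) = (\<Sum>i = 0..m. of_nat (n choose i) * M c1 i (n - i)) + M c1 n 0"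
    by (simp add: nm sum.atMost_Suc atLeast0AtMost)
  have s2: "(\<Sum>i\<le>n. of_nat (n choose i) * M c2 i (n - i)) = M c2 0 n + (\<Sum>i = 0..m. of_nat (n choose Suc i) * M c2 (Suc i) (n - Suc i))"
    unfolding nm atLeast0AtMost by (subst sum.atMost_Suc_shift) simp
  have fin: "(\<Sum>i\<le>n. of_nat (n choose i) * M c1 i (n - i)) + (\<Sum>i\<le>n. of_nat (n choose i) * M c2 i (n - i))
     = M c1 n 0 + M c2 0 n + (\<Sum>i = 0..m. of_nat (n choose i) * M c1 i (n - i) + of_nat (n choose Suc i) * M c2 (Suc i) (n - Suc i))"
    unfolding s1 s2 sum.distrib by (simp add: algebra_simps)
  have "cg (comm u (v + w) * u ^ n * (v + w) ^ n)
     (M c1 n 0 + M c2 0 n + (\<Sum>i = 0..m. of_nat (n choose i) * M c1 i (n - i) + of_nat (n choose Suc i) * M c2 (Suc i) (n - Suc i)))"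
    unfolding L fin[symmetric] using cg_add[OF K1 K2] .
  moreover have "cg (M c1 n 0 + M c2 0 n + (\<Sum>i = 0..m. of_nat (n choose i) * M c1 i (n - i) + of_nat (n choose Suc i) * M c2 (Suc i) (n - Suc i)))
     (comm u v * u ^ n * v ^ n + comm u w * u ^ n * w ^ n
       + (\<Sum>i = 0..m. a i * comm u (v ^ (i + 1) * w ^ (n - i) * u ^ n)))"
    using cg_sym[OF cg_add[OF cg_add[OF kv kw] TS]] by (simp add: c1_def c2_def)
  ultimately show ?thesis by (rule cg_trans)
qed

end
lemma binom_rel: "(n choose i) * (n - i) = (n choose Suc i) * Suc i"
proof (cases n)
  case 0 then show ?thesis by simp
next
  case (Suc m)
  have "(n - i) * (n choose i) = n * (m choose i)" using binomial_absorb_comp[of n i] Suc by simp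
  moreover have "Suc i * (n choose Suc i) = n * (m choose i)" using Suc_times_binomial[of i m] Suc by simp
  ultimately show ?thesis by (simp add: mult.commute)
qed

theorem lemma2p4:
  fixes p :: nat and u v w :: "'k::field freealg"
  assumes "prime p" and "CHAR('k) = p" and "p > 2"
  shows "kappa p u (v + w)
         - (kappa p u v + kappa p u w
            + (\<Sum>i = 0..p - 2. sc (inverse (of_nat (i + 1)) * of_nat (p - 1 choose i))
                 * comm u (v ^ (i + 1) * w ^ (p - (i + 1)) * u ^ (p - 1))))
         \<in> T3"
proof -
  define n where "n = p - 1"
  define m where "m = p - 2"
  have nm: "n = Suc m" using assms(3) by (simp add: n_def m_def)
  define a where "a i = sc (inverse (of_nat (i + 1)) * of_nat (p - 1 choose i) :: 'k)" for i
  have nz: "(of_nat (Suc i) :: 'k) \<noteq> 0" if "i \<le> m" for i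
  proof
    assume "(of_nat (Suc i) :: 'k) = 0"
    then have "p dvd Suc i" using assms(2) of_nat_eq_0_iff_char_dvd[of "Suc i", where 'a='k] by metis
    moreover have "Suc i < p" using that assms(3) by (simp add: m_def)
    ultimately show False by (simp add: nat_dvd_not_less)
  qed
  have invl: "inverse (of_nat (i + 1)) * (c * of_nat (Suc i)) = (c :: 'k)" if "i \<le> m" for i c
  proof -
    have "inverse (of_nat (i + 1)) * (c * of_nat (Suc i)) = c * (inverse (of_nat (Suc i)) * of_nat (Suc i))"
      by (simp only: Suc_eq_plus1 mult.commute mult.left_commute)
    also have "\<dots> = c" using nz[OF that] by simp
    finally show ?thesis .
  qed
  have A1: "a i * of_nat (Suc i) = of_nat (n choose i)" if "i \<le> m" for i
  proof -
    have "a i * of_nat (Suc i) = sc (inverse (of_nat (i + 1)) * of_nat (n choose i) * of_nat (Suc i))"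
      by (simp add: a_def n_def sc_mult sc_of_nat[symmetric] del: of_nat_Suc)
    also have "\<dots> = sc (of_nat (n choose i))" using invl[OF that] by (simp only: mult.assoc)
    finally show ?thesis by (simp add: sc_of_nat)
  qed
  have A2: "a i * of_nat (n - i) = of_nat (n choose Suc i)" if "i \<le> m" for i
  proof -
    have "a i * of_nat (n - i) = sc (inverse (of_nat (i + 1)) * of_nat (n choose i) * of_nat (n - i))"
      by (simp add: a_def n_def sc_mult sc_of_nat[symmetric] del: of_nat_Suc)
    also have "\<dots> = sc (inverse (of_nat (i + 1)) * (of_nat (n choose Suc i) * of_nat (Suc i)))"
    proof -
      have "of_nat (n choose i) * of_nat (n - i) = (of_nat (n choose Suc i) * of_nat (Suc i) :: 'k)"
        by (metis binom_rel of_nat_mult)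
      then show ?thesis by (simp only: mult.assoc)
    qed
    also have "\<dots> = sc (of_nat (n choose Suc i))" using invl[OF that] by (simp only: mult.assoc)
    finally show ?thesis by (simp add: sc_of_nat)
  qed
  show ?thesis unfolding T3_def
  proof (rule InterI)
    fix I :: "'k freealg set" assume "I \<in> {I. T_ideal I \<and> comm (comm (gen 1) (gen 2)) (gen 3) \<in> I}"
    then have TI: "T_ideal I" and g: "comm (comm (gen 1) (gen 2)) (gen 3) \<in> I" by auto
    have "cm I"
    proof
      show "0 \<in> I" using TI by (simp add: T_ideal_def two_sided_ideal_def)
      show "\<And>a b. a \<in> I \<Longrightarrow> b \<in> I \<Longrightarrow> a + b \<in> I" using TI by (simp add: T_ideal_def two_sided_ideal_def)
      show "\<And>a r. a \<in> I \<Longrightarrow> r * a \<in> I" using TI by (simp add: T_ideal_def two_sided_ideal_def)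
      show "\<And>a r. a \<in> I \<Longrightarrow> a * r \<in> I" using TI by (simp add: T_ideal_def two_sided_ideal_def)
      fix x y z :: "'k freealg"
      define s where "s i = (if i = 1 then x else if i = 2 then y else z)" for i :: nat
      have "phi s (comm (comm (gen 1) (gen 2)) (gen 3)) \<in> I"
        using TI g phi_endo[of s] by (auto simp: T_ideal_def)
      then show "comm (comm x y) z \<in> I" by (simp add: phi_comm phi_gen s_def)
    qed
    from cm.main[OF this nm A1 A2, of u v w]
    have "cm.cg I (comm u (v + w) * u ^ n * (v + w) ^ n)
     (comm u v * u ^ n * v ^ n + comm u w * u ^ n * w ^ n
       + (\<Sum>i = 0..m. a i * comm u (v ^ (i + 1) * w ^ (n - i) * u ^ n)))" by blast
    then show "kappa p u (v + w)
         - (kappa p u v + kappa p u w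
            + (\<Sum>i = 0..p - 2. sc (inverse (of_nat (i + 1)) * of_nat (p - 1 choose i))
                 * comm u (v ^ (i + 1) * w ^ (p - (i + 1)) * u ^ (p - 1)))) \<in> I"
      using \<open>cm I\<close> by (simp add: cm.cg_def kappa_def a_def n_def m_def comm_def[of u "v + w"] algebra_simps)
  qed
qed

end
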